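(* Let $\Lambda\subseteq\mathbb Z^D$ be a lattice inducing a lattice tiling of the shape $\mathcal S$, with $n=|\mathcal S|$. Let $\delta$ be a nonzero ternary vector such that $(\Lambda,\mathcal S,\delta)$ defines a folding, with folded-row $p_0,p_1,\dots$. Let $E\subseteq\mathbb Z_n$ be a $B_2$-sequence over $\mathbb Z_n$, and identify each $a\in E$ with its representative in $\{0,1,\dots,n-1\}$. Then: <ol> <li>The set of dots $\{p_a : a\in E\}\subseteq\mathcal S$ (the $B_2$-sequence placed along the folded-row) is a $D$-dimensional DDC.</li> <li>The set $X=\{a\delta+\lambda : a\in E,\ \lambda\in\Lambda\}$ is an infinite $\mathcal S$-DDC with $|E|$ dots, and $X\cap\mathcal S=\{p_a:a\in E\}$.</li> </ol>
   Context: Let $D\ge 1$. A shape is a finite nonempty set $\mathcal S\subset\mathbb Z^D$ containing the origin; the origin is its distinguished center point. A lattice is a set $\Lambda=\{\sum_{j=1}^D u_jv_j : u_1,\dots,u_D\in\mathbb Z\}$ for linearly independent $v_1,\dots,v_D\in\mathbb Z^D$. $\Lambda$ induces a lattice tiling of $\mathcal S$ if the translates $\mathcal S+\lambda$, $\lambda\in\Lambda$, are pairwise disjoint and cover $\mathbb Z^D$. The translate $\mathcal S+\lambda$ is called the copy of $\mathcal S$ with center $\lambda$. For $x\in\mathbb Z^D$, $c(x)$ denotes the unique $\lambda\in\Lambda$ with $x\in\mathcal S+\lambda$. A ternary vector (direction) is a nonzero $\delta\in\{-1,0,+1\}^D$. The folded-row of $(\Lambda,\mathcal S,\delta)$ is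 the sequence $p_0,p_1,p_2,\dots$ defined by $p_0=0$ and $p_{k+1}=(p_k+\delta)-c(p_k+\delta)$. The triple $(\Lambda,\mathcal S,\delta)$ defines a folding if every element of $\mathcal S$ occurs in its folded-row. A subset $E=\{a_1,\dots,a_m\}$ of an abelian group $A$ (with distinct elements) is a $B_2$-sequence over $A$ if all sums $a_{i_1}+a_{i_2}$ with $1\le i_1\le i_2\le m$ are distinct. A finite set $Y\subseteq\mathbb Z^D$ ("dots") is a distinct difference configuration (DDC) if the vectors $y-y'$, over ordered pairs $(y,y')$ of distinct points of $Y$, are pairwise distinct. A set $X\subseteq\mathbb Z^D$ is an infinite $\mathcal S$-DDC with $m$ dots if for every $t\in\mathbb Z^D$ the set $X\cap(\mathcal S+t)$ has exactly $m$ elements and is a DDC. *)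

theory Defs
  imports "HOL-Analysis.Finite_Cartesian_Product"
begin

text \<open>Points of Z^D are represented as int ^ 'd, the dimension D being CARD('d).\<close>

definition is_shape :: "(int ^ 'd) set \<Rightarrow> bool" where
  "is_shape S \<longleftrightarrow> finite S \<and> S \<noteq> {} \<and> 0 \<in> S"

definition int_lin_indep :: "('d \<Rightarrow> int ^ 'd) \<Rightarrow> bool" where
  "int_lin_indep v \<longleftrightarrow>
     (\<forall>u :: 'd \<Rightarrow> int. (\<Sum>j\<in>UNIV. (\<chi> i. u j * v j $ i)) = 0 \<longrightarrow> (\<forall>j. u j = 0))"

definition lattice_gen :: "('d::finite \<Rightarrow> int ^ 'd) \<Rightarrow> (int ^ 'd) set" where
  "lattice_gen v = {(\<Sum>j\<in>UNIV. (\<chi> i. u j * v j $ i)) | u :: 'd \<Rightarrow> int. True}"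

definition is_lattice :: "(int ^ 'd::finite) set \<Rightarrow> bool" where
  "is_lattice L \<longleftrightarrow> (\<exists>v. int_lin_indep v \<and> L = lattice_gen v)"

definition translate :: "(int ^ 'd) set \<Rightarrow> int ^ 'd \<Rightarrow> (int ^ 'd) set" where
  "translate S t = (\<lambda>s. s + t) ` S"

definition lattice_tiling :: "(int ^ 'd::finite) set \<Rightarrow> (int ^ 'd) set \<Rightarrow> bool" where
  "lattice_tiling L S \<longleftrightarrow>
     (\<forall>l1\<in>L. \<forall>l2\<in>L. l1 \<noteq> l2 \<longrightarrow> translate S l1 \<inter> translate S l2 = {}) \<and>
     (\<Union>l\<in>L. translate S l) = UNIV"

definition center :: "(int ^ 'd) set \<Rightarrow> (int ^ 'd) set \<Rightarrow> int ^ 'd \<Rightarrow> int ^ 'd" where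
  "center L S x = (THE l. l \<in> L \<and> x \<in> translate S l)"

definition ternary :: "int ^ 'd \<Rightarrow> bool" where
  "ternary \<delta> \<longleftrightarrow> \<delta> \<noteq> 0 \<and> (\<forall>i. \<delta> $ i \<in> {-1, 0, 1})"

primrec folded_row ::
  "(int ^ 'd) set \<Rightarrow> (int ^ 'd) set \<Rightarrow> int ^ 'd \<Rightarrow> nat \<Rightarrow> int ^ 'd" where
  "folded_row L S \<delta> 0 = 0"
| "folded_row L S \<delta> (Suc k) =
     (folded_row L S \<delta> k + \<delta>) - center L S (folded_row L S \<delta> k + \<delta>)"

definition defines_folding :: "(int ^ 'd) set \<Rightarrow> (int ^ 'd) set \<Rightarrow> int ^ 'd \<Rightarrow> bool" where
  "defines_folding L S \<delta> \<longleftrightarrow> S \<subseteq> range (folded_row L S \<delta>)"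

definition B2_mod :: "nat \<Rightarrow> nat set \<Rightarrow> bool" where
  "B2_mod n E \<longleftrightarrow> E \<subseteq> {..<n} \<and>
     (\<forall>a\<in>E. \<forall>b\<in>E. \<forall>c\<in>E. \<forall>d\<in>E.
        (a + b) mod n = (c + d) mod n \<longrightarrow> (a = c \<and> b = d) \<or> (a = d \<and> b = c))"

definition is_DDC :: "(int ^ 'd) set \<Rightarrow> bool" where
  "is_DDC Y \<longleftrightarrow> finite Y \<and>
     (\<forall>y1\<in>Y. \<forall>y2\<in>Y. \<forall>y3\<in>Y. \<forall>y4\<in>Y.
        y1 \<noteq> y2 \<longrightarrow> y3 \<noteq> y4 \<longrightarrow> y1 - y2 = y3 - y4 \<longrightarrow> y1 = y3 \<and> y2 = y4)"

definition infinite_S_DDC :: "(int ^ 'd) set \<Rightarrow> (int ^ 'd) set \<Rightarrow> nat \<Rightarrow> bool" where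
  "infinite_S_DDC S X m \<longleftrightarrow>
     (\<forall>t. card (X \<inter> translate S t) = m \<and> is_DDC (X \<inter> translate S t))"

definition int_smult :: "int \<Rightarrow> int ^ 'd \<Rightarrow> int ^ 'd" where
  "int_smult a v = (\<chi> i. a * v $ i)"

end

theory Submission imports Defs "HOL-Number_Theory.Cong" begin

lemma vsum_comp: "(sum f (A::'a set)) $ i = sum (\<lambda>j. (f j :: int ^ 'd) $ i) A"
  by (induction A rule: infinite_finite_induct) auto

lemma lg_def: "x \<in> lattice_gen v \<longleftrightarrow> (\<exists>u. x = (\<Sum>j\<in>UNIV. (\<chi> i. u j * v j $ i)))"
  unfolding lattice_gen_def by simp

lemma lattice_gen_mem: "x \<in> lattice_gen v \<longleftrightarrow> (\<exists>u. \<forall>i. x $ i = (\<Sum>j\<in>UNIV. u j * v j $ i))"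
proof
  assume "x \<in> lattice_gen v"
  then obtain u where "x = (\<Sum>j\<in>UNIV. (\<chi> i. u j * v j $ i))" unfolding lg_def by blast
  then have "\<forall>i. x $ i = (\<Sum>j\<in>UNIV. u j * v j $ i)" by (simp add: vsum_comp)
  then show "\<exists>u. \<forall>i. x $ i = (\<Sum>j\<in>UNIV. u j * v j $ i)" by blast
next
  assume "\<exists>u. \<forall>i. x $ i = (\<Sum>j\<in>UNIV. u j * v j $ i)"
  then obtain u where u: "\<forall>i. x $ i = (\<Sum>j\<in>UNIV. u j * v j $ i)" by blast
  have "x = (\<Sum>j\<in>UNIV. (\<chi> i. u j * v j $ i))"
    unfolding vec_eq_iff vsum_comp using u by simp
  then show "x \<in> lattice_gen v" unfolding lg_def by blast
qed

lemma lat_zero: assumes "is_lattice L" shows "0 \<in> L"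
proof -
  obtain v where L: "L = lattice_gen v" using assms(1) unfolding is_lattice_def by blast
  show ?thesis unfolding L lattice_gen_mem by (rule exI[of _ "\<lambda>_. 0"]) simp
qed

lemma lat_add: assumes "is_lattice L" "x \<in> L" "y \<in> L" shows "x + y \<in> L"
proof -
  obtain v where L: "L = lattice_gen v" using assms(1) unfolding is_lattice_def by blast
  obtain u where u: "\<forall>i. x $ i = (\<Sum>j\<in>UNIV. u j * v j $ i)" using assms(2) unfolding L lattice_gen_mem by blast
  obtain u' where u': "\<forall>i. y $ i = (\<Sum>j\<in>UNIV. u' j * v j $ i)" using assms(3) unfolding L lattice_gen_mem by blast
  have "\<forall>i. (x+y) $ i = (\<Sum>j\<in>UNIV. (u j + u' j) * v j $ i)"
    using u u' by (simp add: distrib_right sum.distrib)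
  then show ?thesis unfolding L lattice_gen_mem by (intro exI[of _ "\<lambda>j. u j + u' j"])
qed

lemma lat_smult: assumes "is_lattice L" "x \<in> L" shows "int_smult q x \<in> L"
proof -
  obtain v where L: "L = lattice_gen v" using assms(1) unfolding is_lattice_def by blast
  obtain u where u: "\<forall>i. x $ i = (\<Sum>j\<in>UNIV. u j * v j $ i)" using assms(2) unfolding L lattice_gen_mem by blast
  have "\<forall>i. (int_smult q x) $ i = (\<Sum>j\<in>UNIV. (q * u j) * v j $ i)"
    using u by (simp add: int_smult_def sum_distrib_left mult.assoc)
  then show ?thesis unfolding L lattice_gen_mem by (intro exI[of _ "\<lambda>j. q * u j"])
qed

lemma smult_neg: "int_smult (-1) x = - x"
  by (simp add: int_smult_def vec_eq_iff)

lemma lat_neg: "is_lattice L \<Longrightarrow> x \<in> L \<Longrightarrow> - x \<in> L"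
  using lat_smult[of L x "-1"] by (simp add: smult_neg)

lemma lat_diff: "is_lattice L \<Longrightarrow> x \<in> L \<Longrightarrow> y \<in> L \<Longrightarrow> x - y \<in> L"
  using lat_add[of L x "-y"] lat_neg[of L y] by simp

lemma smult_add: "int_smult (a + b) v = int_smult a v + int_smult b v"
  by (simp add: int_smult_def vec_eq_iff distrib_right)

lemma smult_smult: "int_smult a (int_smult b v) = int_smult (a * b) v"
  by (simp add: int_smult_def vec_eq_iff mult.assoc)

lemma smult_one: "int_smult 1 v = v" by (simp add: int_smult_def vec_eq_iff)
lemma smult_zero: "int_smult 0 v = 0" by (simp add: int_smult_def vec_eq_iff)


lemma translate_0: "translate S 0 = S" by (simp add: translate_def)

locale fctx =
  fixes L S :: "(int ^ 'd::finite) set" and \<delta> :: "int ^ 'd"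
  assumes shp: "is_shape S" and lat: "is_lattice L" and til: "lattice_tiling L S"
    and fld: "defines_folding L S \<delta>"
begin

abbreviation p where "p \<equiv> folded_row L S \<delta>"
definition sm :: "nat \<Rightarrow> int ^ 'd" where "sm k = int_smult (int k) \<delta>"

lemma sm_add: "sm (a + b) = sm a + sm b"
  unfolding sm_def by (simp add: smult_add)

lemma sm_Suc: "sm (Suc k) = sm k + \<delta>"
  using sm_add[of k 1] by (simp add: sm_def smult_one)

lemma sm_0: "sm 0 = 0" by (simp add: sm_def smult_zero)

lemma uniq: assumes "s1 \<in> S" "s2 \<in> S" "s1 - s2 \<in> L" shows "s1 = s2"
proof (rule ccontr)
  assume ne: "s1 \<noteq> s2"
  have a: "s1 \<in> translate S 0" using assms(1) by (simp add: translate_0)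
  have b: "s1 \<in> translate S (s1 - s2)" unfolding translate_def
    by (rule image_eqI[of _ _ s2]) (auto simp: assms(2))
  have "0 \<noteq> s1 - s2" using ne by simp
  then have "translate S 0 \<inter> translate S (s1 - s2) = {}"
    using til lat_zero[OF lat] assms(3) unfolding lattice_tiling_def by blast
  then show False using a b by blast
qed

lemma center: "center L S x \<in> L \<and> x - center L S x \<in> S"
proof -
  have ex: "\<exists>l. l \<in> L \<and> x \<in> translate S l" using til unfolding lattice_tiling_def by blast
  have "\<exists>!l. l \<in> L \<and> x \<in> translate S l"
  proof (rule ex_ex1I[OF ex])
    fix l1 l2 assume "l1 \<in> L \<and> x \<in> translate S l1" "l2 \<in> L \<and> x \<in> translate S l2"
    then show "l1 = l2" using til unfolding lattice_tiling_def by blast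
  qed
  then have "center L S x \<in> L \<and> x \<in> translate S (center L S x)"
    unfolding center_def by (rule theI')
  then obtain s where "center L S x \<in> L" "x = s + center L S x" "s \<in> S"
    unfolding translate_def by auto
  moreover then have "x - center L S x = s" by (metis add_diff_cancel_right')
  ultimately show ?thesis by simp
qed

lemma p_in: "p k \<in> S"
proof (induction k)
  case 0 then show ?case using shp by (simp add: is_shape_def)
next
  case (Suc k) then show ?case using center by simp
qed

lemma p_sm: "p k - sm k \<in> L"
proof (induction k)
  case 0 then show ?case using lat_zero[OF lat] by (simp add: sm_0)
next
  case (Suc k)
  have eq: "p (Suc k) - sm (Suc k) = (p k - sm k) - center L S (p k + \<delta>)"
    by (simp add: sm_Suc algebra_simps)
  show ?case unfolding eq using lat_diff[OF lat Suc] center by blast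
qed

lemma pA: "p j = p k \<longleftrightarrow> sm j - sm k \<in> L"
proof
  assume "p j = p k"
  then have eq: "sm j - sm k = (p k - sm k) - (p j - sm j)" by (simp add: algebra_simps)
  show "sm j - sm k \<in> L" unfolding eq by (rule lat_diff[OF lat p_sm p_sm])
next
  assume h: "sm j - sm k \<in> L"
  have eq: "p j - p k = ((p j - sm j) - (p k - sm k)) + (sm j - sm k)" by (simp add: algebra_simps)
  have "p j - p k \<in> L" unfolding eq by (rule lat_add[OF lat lat_diff[OF lat p_sm p_sm] h])
  then show "p j = p k" using uniq p_in by blast
qed

lemma sm_diff: "j < k \<Longrightarrow> sm k - sm j = sm (k - j)"
  using sm_add[of "k - j" j] by simp

lemma exm: "\<exists>m>0. sm m \<in> L"
proof -
  have "finite S" using shp by (simp add: is_shape_def)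
  moreover have "range p \<subseteq> S" using p_in by blast
  ultimately have "finite (range p)" by (rule rev_finite_subset)
  then have "\<not> inj p" using finite_imageD infinite_UNIV_nat by blast
  then obtain j k where jk: "j \<noteq> k" "p j = p k" unfolding inj_def by blast
  show ?thesis
  proof (cases "j < k")
    case True
    then have "sm (k - j) \<in> L" using jk pA sm_diff by metis
    then show ?thesis using True by (intro exI[of _ "k-j"]) simp
  next
    case False
    then have "k < j" using jk by simp
    then have "sm (j - k) \<in> L" using jk pA sm_diff by metis
    then show ?thesis using \<open>k < j\<close> by (intro exI[of _ "j-k"]) simp
  qed
qed

definition m where "m = (LEAST m. 0 < m \<and> sm m \<in> L)"

lemma m_prop: "0 < m \<and> sm m \<in> L"
  unfolding m_def using exm by (rule LeastI_ex)

lemma m_min: "0 < r \<Longrightarrow> r < m \<Longrightarrow> sm r \<notin> L"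
  unfolding m_def using not_less_Least by blast

lemma sm_mult: "sm (m * q) = int_smult (int q) (sm m)"
  unfolding sm_def by (simp add: smult_smult mult.commute)

lemma per: "p k = p (k mod m)"
proof -
  have k: "k = k mod m + m * (k div m)" by simp
  have "sm k - sm (k mod m) = sm (m * (k div m))"
    using sm_add[of "k mod m" "m * (k div m)"] k by (metis add_diff_cancel_left')
  also have "\<dots> \<in> L" unfolding sm_mult using lat_smult[OF lat] m_prop by blast
  finally show ?thesis using pA by blast
qed

lemma injm: assumes "i < m" "j < m" "p i = p j" shows "i = j"
proof (rule ccontr)
  assume "i \<noteq> j"
  then consider "i < j" | "j < i" by linarith
  then show False
  proof cases
    case 1
    then have "sm (j - i) \<in> L" using assms pA sm_diff by metis
    then show False using m_min[of "j - i"] 1 assms by simp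
  next
    case 2
    then have "sm (i - j) \<in> L" using assms pA sm_diff by metis
    then show False using m_min[of "i - j"] 2 assms by simp
  qed
qed

lemma pB: "p j = p k \<longleftrightarrow> j mod m = k mod m"
proof
  assume "p j = p k"
  then have "p (j mod m) = p (k mod m)" using per by metis
  then show "j mod m = k mod m" using injm m_prop by simp
next
  assume "j mod m = k mod m" then show "p j = p k" using per by metis
qed

lemma card_S: "card S = m"
proof -
  have "S \<subseteq> range p" using fld unfolding defines_folding_def .
  also have "range p \<subseteq> p ` {..<m}"
  proof
    fix x assume "x \<in> range p"
    then obtain k where "x = p k" by blast
    then have "x = p (k mod m)" using per by metis
    moreover have "k mod m < m" using m_prop by simp
    ultimately show "x \<in> p ` {..<m}" by blast
  qed
  finally have "S = p ` {..<m}" using p_in by blast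
  moreover have "inj_on p {..<m}" using injm unfolding inj_on_def by blast
  ultimately show ?thesis by (metis card_image card_lessThan)
qed

lemma pC: "p j = p k \<longleftrightarrow> j mod card S = k mod card S"
  using pB card_S by simp

context
  fixes E :: "nat set"
  assumes B2: "B2_mod (card S) E"
begin

lemma E_lt: "a \<in> E \<Longrightarrow> a < card S" using B2 unfolding B2_mod_def by blast

lemma E_fin: "finite E"
  using B2 unfolding B2_mod_def using finite_subset by blast

lemma shinj: assumes "a \<in> E" "b \<in> E" "p (a + k) = p (b + k)" shows "a = b"
proof -
  have "(a + k) mod card S = (b + k) mod card S" using assms(3) pC by blast
  then have "a mod card S = b mod card S"
    using cong_add_rcancel_nat unfolding cong_def by blast
  then show ?thesis using E_lt assms by simp
qed

lemma sh_card: "card ((\<lambda>a. p (a + k) + t) ` E) = card E"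
proof (rule card_image)
  show "inj_on (\<lambda>a. p (a + k) + t) E" unfolding inj_on_def using shinj by simp
qed

lemma sh_DDC: "is_DDC ((\<lambda>a. p (a + k) + t) ` E)"
  unfolding is_DDC_def
proof (rule conjI)
  show "finite ((\<lambda>a. p (a + k) + t) ` E)" using E_fin by simp
next
  show "\<forall>y1\<in>(\<lambda>a. p (a + k) + t) ` E. \<forall>y2\<in>(\<lambda>a. p (a + k) + t) ` E.
     \<forall>y3\<in>(\<lambda>a. p (a + k) + t) ` E. \<forall>y4\<in>(\<lambda>a. p (a + k) + t) ` E.
        y1 \<noteq> y2 \<longrightarrow> y3 \<noteq> y4 \<longrightarrow> y1 - y2 = y3 - y4 \<longrightarrow> y1 = y3 \<and> y2 = y4"
  proof (intro ballI impI)
  fix y1 y2 y3 y4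
  assume y: "y1 \<in> (\<lambda>a. p (a + k) + t) ` E" "y2 \<in> (\<lambda>a. p (a + k) + t) ` E"
    "y3 \<in> (\<lambda>a. p (a + k) + t) ` E" "y4 \<in> (\<lambda>a. p (a + k) + t) ` E"
    and ne: "y1 \<noteq> y2" "y3 \<noteq> y4" and eq: "y1 - y2 = y3 - y4"
  obtain a b c d where abcd: "a \<in> E" "b \<in> E" "c \<in> E" "d \<in> E"
    "y1 = p (a + k) + t" "y2 = p (b + k) + t" "y3 = p (c + k) + t" "y4 = p (d + k) + t"
    using y by blast
  have e: "p (a + k) - p (b + k) = p (c + k) - p (d + k)" using eq abcd by simp
  have "sm (a + d + 2 * k) - sm (b + c + 2 * k) =
        (sm (a + k) + sm (d + k)) - (sm (b + k) + sm (c + k))"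
  proof -
    have "a + d + 2 * k = (a + k) + (d + k)" "b + c + 2 * k = (b + k) + (c + k)" by simp_all
    then show ?thesis using sm_add by metis
  qed
  also have "\<dots> = ((p (b + k) - sm (b + k)) - (p (a + k) - sm (a + k)))
      + ((p (c + k) - sm (c + k)) - (p (d + k) - sm (d + k)))
      + ((p (a + k) - p (b + k)) - (p (c + k) - p (d + k)))"
    by (simp add: algebra_simps)
  also have "\<dots> \<in> L"
  proof -
    have z: "(p (a + k) - p (b + k)) - (p (c + k) - p (d + k)) = 0" using e by simp
    show ?thesis unfolding z
      by (rule lat_add[OF lat lat_add[OF lat lat_diff[OF lat p_sm p_sm] lat_diff[OF lat p_sm p_sm]] lat_zero[OF lat]])
  qed
  finally have "p (a + d + 2 * k) = p (b + c + 2 * k)" using pA by blast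
  then have "(a + d + 2 * k) mod card S = (b + c + 2 * k) mod card S" using pC by blast
  then have "(a + d) mod card S = (c + b) mod card S"
    using cong_add_rcancel_nat[of "a + d" "2 * k" "b + c" "card S"] unfolding cong_def
    by (simp add: add.commute)
  then have "(a = c \<and> d = b) \<or> (a = b \<and> d = c)"
    using B2 abcd(1-4) unfolding B2_mod_def by blast
  then show "y1 = y3 \<and> y2 = y4" using abcd ne by auto
  qed
qed

lemma X_inter:
  assumes k: "- t - sm k \<in> L"
  shows "{int_smult (int a) \<delta> + l | a l. a \<in> E \<and> l \<in> L} \<inter> translate S t
         = (\<lambda>a. p (a + k) + t) ` E"
proof (intro equalityI subsetI)
  fix x assume "x \<in> {int_smult (int a) \<delta> + l | a l. a \<in> E \<and> l \<in> L} \<inter> translate S t"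
  then obtain a l s where x: "a \<in> E" "l \<in> L" "x = sm a + l" "s \<in> S" "x = s + t"
    unfolding translate_def sm_def by blast
  have "s - p (a + k) = l + (- t - sm k) - (p (a + k) - sm (a + k))"
    using x sm_add[of a k] by (simp add: algebra_simps)
  also have "\<dots> \<in> L" using lat_add[OF lat] lat_diff[OF lat] x(2) k p_sm by blast
  finally have "s = p (a + k)" using uniq x(4) p_in by blast
  then show "x \<in> (\<lambda>a. p (a + k) + t) ` E" using x by blast
next
  fix x assume "x \<in> (\<lambda>a. p (a + k) + t) ` E"
  then obtain a where a: "a \<in> E" "x = p (a + k) + t" by blast
  define l where "l = (p (a + k) - sm (a + k)) - (- t - sm k)"
  have l: "l \<in> L" unfolding l_def using lat_diff[OF lat p_sm k] .
  have "x = int_smult (int a) \<delta> + l"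
    unfolding l_def a(2) using sm_add[of a k] by (simp add: sm_def algebra_simps)
  then have "x \<in> {int_smult (int a) \<delta> + l | a l. a \<in> E \<and> l \<in> L}" using a l by blast
  moreover have "x \<in> translate S t" unfolding translate_def a(2) using p_in by blast
  ultimately show "x \<in> {int_smult (int a) \<delta> + l | a l. a \<in> E \<and> l \<in> L} \<inter> translate S t" by blast
qed

lemma exk: "\<exists>k. - t - sm k \<in> L"
proof -
  obtain l where l: "l \<in> L" "- t \<in> translate S l" using til unfolding lattice_tiling_def by blast
  then obtain s where s: "s \<in> S" "- t = s + l" unfolding translate_def by blast
  obtain k where "s = p k" using s(1) fld unfolding defines_folding_def by blast
  then have "- t - sm k = (p k - sm k) + l" using s by (simp add: algebra_simps)
  then show ?thesis using lat_add[OF lat p_sm l(1)] by metis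
qed

lemma main:
  shows "{p a | a. a \<in> E} \<subseteq> S
       \<and> is_DDC {p a | a. a \<in> E}
       \<and> infinite_S_DDC S {int_smult (int a) \<delta> + l | a l. a \<in> E \<and> l \<in> L} (card E)
       \<and> {int_smult (int a) \<delta> + l | a l. a \<in> E \<and> l \<in> L} \<inter> S = {p a | a. a \<in> E}"
proof (intro conjI)
  have img: "{p a | a. a \<in> E} = (\<lambda>a. p (a + 0) + 0) ` E" by auto
  show "{p a | a. a \<in> E} \<subseteq> S" using p_in by blast
  show "is_DDC {p a | a. a \<in> E}" unfolding img by (rule sh_DDC)
  show "infinite_S_DDC S {int_smult (int a) \<delta> + l | a l. a \<in> E \<and> l \<in> L} (card E)"
    unfolding infinite_S_DDC_def
  proof
    fix t
    obtain k where "- t - sm k \<in> L" using exk by blast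
    then show "card ({int_smult (int a) \<delta> + l | a l. a \<in> E \<and> l \<in> L} \<inter> translate S t) = card E \<and>
      is_DDC ({int_smult (int a) \<delta> + l | a l. a \<in> E \<and> l \<in> L} \<inter> translate S t)"
      using X_inter sh_card sh_DDC by simp
  qed
  have "- 0 - sm 0 \<in> L" using lat_zero[OF lat] by (simp add: sm_0)
  from X_inter[OF this] show "{int_smult (int a) \<delta> + l | a l. a \<in> E \<and> l \<in> L} \<inter> S = {p a | a. a \<in> E}"
    unfolding img translate_0 .
qed

end
end

theorem mainTheorem9:
  fixes L S :: "(int ^ 'd::finite) set" and \<delta> :: "int ^ 'd" and E :: "nat set"
  assumes "is_shape S"
    and "is_lattice L"
    and "lattice_tiling L S"
    and "ternary \<delta>"
    and "defines_folding L S \<delta>"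
    and "B2_mod (card S) E"
  shows "{folded_row L S \<delta> a | a. a \<in> E} \<subseteq> S
       \<and> is_DDC {folded_row L S \<delta> a | a. a \<in> E}
       \<and> infinite_S_DDC S {int_smult (int a) \<delta> + l | a l. a \<in> E \<and> l \<in> L} (card E)
       \<and> {int_smult (int a) \<delta> + l | a l. a \<in> E \<and> l \<in> L} \<inter> S = {folded_row L S \<delta> a | a. a \<in> E}"
proof -
  interpret fctx L S \<delta> using assms by (unfold_locales) auto
  show ?thesis using main[OF assms(6)] .
qed

end
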